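(* In the Byblos protocol described in the context, if a transaction is assigned timestamp $t$, then for every integer $t'$ with $0<t'<t$, some transaction is assigned timestamp $t'$.
   Context: Byblos timestamping. There are $n=4f+1$ servers, at most $f$ of which are Byzantine; the rest are correct. Clients are not Byzantine (they may crash). Messages between correct parties are eventually delivered, channels are FIFO, senders are authenticated, and client messages are signed and unforgeable. Each correct server keeps an integer $\mathit{clock}$, initially $0$. Client with transaction $T$: broadcasts $\mathrm{Propose}(T)$ to all servers; waits for $\mathrm{ProposeAck}(T,\cdot)$ responses from at least $n-f$ servers; letting $\mathit{timestamp}[s]$ be the value received from server $s$ ($0$ if none), sets $\hat t$ to $1$ plus the $(f+1)$-st largest value of $\mathit{timestamp}[\cdot]$; then broadcasts $\mathrm{Confirm}(T,\hat t)$. Correct server: on $\mathrm{Propose}(T)$ from a client, replies $\mathrm{ProposeAck}(T,\mathit{clock})$ with its current clock (and forwards the proposal with that clock value to the other servers); on receiving $\mathrm{Confirm}(T,\hat t)$ from a client or forwarded by a server, sets $\mathit{clock}:=\max(\mathit{clock},\hat t)$ and forwards $\mathrm{Confirm}(T,\hat t)$ to all servers if not previously done. The clock changes only in this way. A transaction $T$ is \emph{assigned timestamp} $t$ if some correct server received a $\mathrm{Confirm}(T,t)$ message from a client. *)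

theory Defs
  imports Main
begin

text \<open>Operational model of the Byblos timestamping protocol.
  Servers are the naturals 0..n-1; Byz is the set of Byzantine servers.
  Clients have an arbitrary type 'c, transactions an arbitrary type 'tx.\<close>

datatype 'c node = Srv nat | Cli 'c

datatype 'tx msg =
    Propose 'tx
  | ProposeAck 'tx int
  | FwdPropose 'tx int   \<comment> \<open>proposal forwarded by a server with its clock value\<close>
  | Confirm 'tx int

datatype cphase = Idle | Waiting "nat \<Rightarrow> int option" | Confirmed

record ('c, 'tx) config =
  clk     :: "nat \<Rightarrow> int"
  fwd     :: "nat \<Rightarrow> ('tx \<times> int) set"            \<comment> \<open>Confirms already forwarded\<close>
  cst     :: "'c \<Rightarrow> 'tx \<Rightarrow> cphase"
  crashed :: "'c set"
  chan    :: "('c node \<times> 'c node) \<Rightarrow> 'tx msg list"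
  signed  :: "('tx \<times> int) set"                  \<comment> \<open>Confirm messages ever signed by clients\<close>

datatype ('c, 'tx) event =
    EvPropose 'c 'tx
  | EvConfirm 'c 'tx
  | EvDeliver "'c node" "'c node" "'tx msg"   \<comment> \<open>sender, receiver, message\<close>
  | EvCrash 'c
  | EvByz nat "'c node" "'tx msg"
  | EvSkip

definition init_config :: "('c, 'tx) config" where
  "init_config = \<lparr>clk = (\<lambda>_. 0), fwd = (\<lambda>_. {}), cst = (\<lambda>_ _. Idle), crashed = {},
                  chan = (\<lambda>_. []), signed = {}\<rparr>"

definition send :: "'c node \<Rightarrow> 'c node \<Rightarrow> 'tx msg \<Rightarrow> ('c, 'tx) config \<Rightarrow> ('c, 'tx) config" where
  "send p q m \<sigma> = \<sigma>\<lparr>chan := (chan \<sigma>)((p, q) := chan \<sigma> (p, q) @ [m])\<rparr>"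

definition bcast :: "'c node \<Rightarrow> nat set \<Rightarrow> 'tx msg \<Rightarrow> ('c, 'tx) config \<Rightarrow> ('c, 'tx) config" where
  "bcast p S m \<sigma> = \<sigma>\<lparr>chan := (\<lambda>ch. if fst ch = p \<and> snd ch \<in> Srv ` S then chan \<sigma> ch @ [m]
                                       else chan \<sigma> ch)\<rparr>"

definition srv_handle :: "nat \<Rightarrow> nat \<Rightarrow> 'c node \<Rightarrow> 'tx msg \<Rightarrow> ('c, 'tx) config \<Rightarrow> ('c, 'tx) config" where
  "srv_handle n s p m \<sigma> =
    (case m of
       Propose T \<Rightarrow>
         (case p of
            Cli c \<Rightarrow> bcast (Srv s) ({..<n} - {s}) (FwdPropose T (clk \<sigma> s))
                       (send (Srv s) (Cli c) (ProposeAck T (clk \<sigma> s)) \<sigma>)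
          | Srv _ \<Rightarrow> \<sigma>)
     | Confirm T t \<Rightarrow>
         (let \<sigma>' = \<sigma>\<lparr>clk := (clk \<sigma>)(s := max (clk \<sigma> s) t)\<rparr> in
          if (T, t) \<in> fwd \<sigma> s then \<sigma>'
          else bcast (Srv s) ({..<n} - {s}) (Confirm T t)
                 (\<sigma>'\<lparr>fwd := (fwd \<sigma>)(s := insert (T, t) (fwd \<sigma> s))\<rparr>))
     | _ \<Rightarrow> \<sigma>)"

definition cli_handle :: "nat \<Rightarrow> 'c \<Rightarrow> 'c node \<Rightarrow> 'tx msg \<Rightarrow> ('c, 'tx) config \<Rightarrow> ('c, 'tx) config" where
  "cli_handle n c p m \<sigma> =
    (if c \<in> crashed \<sigma> then \<sigma> else
     (case (p, m) of
        (Srv s, ProposeAck T v) \<Rightarrow>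
          (case cst \<sigma> c T of
             Waiting ts \<Rightarrow>
               (if s < n \<and> ts s = None
                then \<sigma>\<lparr>cst := (cst \<sigma>)(c := (cst \<sigma> c)(T := Waiting (ts(s := Some v))))\<rparr>
                else \<sigma>)
           | _ \<Rightarrow> \<sigma>)
      | _ \<Rightarrow> \<sigma>))"

definition deliver :: "nat \<Rightarrow> nat set \<Rightarrow> 'c node \<Rightarrow> 'c node \<Rightarrow> 'tx msg \<Rightarrow> ('c, 'tx) config \<Rightarrow> ('c, 'tx) config" where
  "deliver n Byz p q m \<sigma> =
    (let \<sigma>0 = \<sigma>\<lparr>chan := (chan \<sigma>)((p, q) := tl (chan \<sigma> (p, q)))\<rparr> in
     case q of
       Srv s \<Rightarrow> (if s < n \<and> s \<notin> Byz then srv_handle n s p m \<sigma>0 else \<sigma>0)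
     | Cli c \<Rightarrow> cli_handle n c p m \<sigma>0)"

definition kth_largest :: "nat \<Rightarrow> int list \<Rightarrow> int" where
  "kth_largest k xs = rev (sort xs) ! (k - 1)"

definition client_ts :: "nat \<Rightarrow> nat \<Rightarrow> (nat \<Rightarrow> int option) \<Rightarrow> int" where
  "client_ts n f ts =
     1 + kth_largest (f + 1) (map (\<lambda>s. case ts s of None \<Rightarrow> 0 | Some v \<Rightarrow> v) [0..<n])"

definition step :: "nat \<Rightarrow> nat \<Rightarrow> nat set \<Rightarrow> ('c, 'tx) config \<Rightarrow> ('c, 'tx) event \<Rightarrow> ('c, 'tx) config \<Rightarrow> bool" where
  "step n f Byz \<sigma> ev \<sigma>' =
    (case ev of
       EvPropose c T \<Rightarrow>
         c \<notin> crashed \<sigma> \<and> cst \<sigma> c T = Idle \<and>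
         \<sigma>' = bcast (Cli c) {..<n} (Propose T)
                (\<sigma>\<lparr>cst := (cst \<sigma>)(c := (cst \<sigma> c)(T := Waiting (\<lambda>_. None)))\<rparr>)
     | EvConfirm c T \<Rightarrow>
         c \<notin> crashed \<sigma> \<and>
         (\<exists>ts. cst \<sigma> c T = Waiting ts \<and> n - f \<le> card {s. s < n \<and> ts s \<noteq> None} \<and>
               \<sigma>' = bcast (Cli c) {..<n} (Confirm T (client_ts n f ts))
                      (\<sigma>\<lparr>cst := (cst \<sigma>)(c := (cst \<sigma> c)(T := Confirmed)),
                         signed := insert (T, client_ts n f ts) (signed \<sigma>)\<rparr>))
     | EvDeliver p q m \<Rightarrow>
         (\<exists>rest. chan \<sigma> (p, q) = m # rest) \<and> \<sigma>' = deliver n Byz p q m \<sigma>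
     | EvCrash c \<Rightarrow> \<sigma>' = \<sigma>\<lparr>crashed := insert c (crashed \<sigma>)\<rparr>
     | EvByz s q m \<Rightarrow>
         s \<in> Byz \<and> (\<forall>T t. m = Confirm T t \<longrightarrow> (T, t) \<in> signed \<sigma>) \<and>
         \<sigma>' = send (Srv s) q m \<sigma>
     | EvSkip \<Rightarrow> \<sigma>' = \<sigma>)"

definition correct :: "nat \<Rightarrow> nat set \<Rightarrow> (nat \<Rightarrow> ('c, 'tx) config) \<Rightarrow> 'c node \<Rightarrow> bool" where
  "correct n Byz ex p =
    (case p of Srv s \<Rightarrow> s < n \<and> s \<notin> Byz | Cli c \<Rightarrow> (\<forall>j. c \<notin> crashed (ex j)))"

text \<open>Infinite fair run. Channels are reliable: messages sent by any client (even one that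
  later crashes) or by a correct server to a correct party are eventually delivered.\<close>
definition run :: "nat \<Rightarrow> nat \<Rightarrow> nat set \<Rightarrow> (nat \<Rightarrow> ('c, 'tx) config) \<Rightarrow> (nat \<Rightarrow> ('c, 'tx) event) \<Rightarrow> bool" where
  "run n f Byz ex lab =
    (ex 0 = init_config \<and>
     (\<forall>i. step n f Byz (ex i) (lab i) (ex (Suc i))) \<and>
     (\<forall>i p q. (correct n Byz ex p \<or> (\<exists>c. p = Cli c)) \<and> correct n Byz ex q \<and>
              chan (ex i) (p, q) \<noteq> [] \<longrightarrow> (\<exists>j\<ge>i. \<exists>m. lab j = EvDeliver p q m)))"

definition assigned :: "nat \<Rightarrow> nat set \<Rightarrow> (nat \<Rightarrow> ('c, 'tx) event) \<Rightarrow> 'tx \<Rightarrow> int \<Rightarrow> bool" where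
  "assigned n Byz lab T t =
    (\<exists>i c s. s < n \<and> s \<notin> Byz \<and> lab i = EvDeliver (Cli c) (Srv s) (Confirm T t))"

end

theory Submission imports Defs begin

lemma kth_count:
  fixes xs :: "int list"
  assumes "1 \<le> k" "k \<le> length xs"
  shows "k \<le> card {i. i < length xs \<and> kth_largest k xs \<le> xs ! i}"
proof -
  define ys where "ys = rev (sort xs)"
  define v where "v = kth_largest k xs"
  have v: "v = ys ! (k - 1)" by (simp add: v_def ys_def kth_largest_def)
  have len: "length ys = length xs" by (simp add: ys_def)
  have "{..<k} \<subseteq> {i. i < length ys \<and> v \<le> ys ! i}"
  proof
    fix j assume j: "j \<in> {..<k}"
    have s: "sorted (sort xs)" by simp
    have "ys ! j = sort xs ! (length xs - 1 - j)" using j assms by (simp add: ys_def rev_nth)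
    moreover have "ys ! (k-1) = sort xs ! (length xs - 1 - (k-1))" using assms by (simp add: ys_def rev_nth)
    moreover have "sort xs ! (length xs - 1 - (k-1)) \<le> sort xs ! (length xs - 1 - j)"
      using j assms by (intro sorted_nth_mono[OF s]) auto
    ultimately show "j \<in> {i. i < length ys \<and> v \<le> ys ! i}" using j assms len v by auto
  qed
  hence "card {..<k} \<le> card {i. i < length ys \<and> v \<le> ys ! i}"
    by (intro card_mono) auto
  hence "k \<le> card {i. i < length ys \<and> v \<le> ys ! i}" by simp
  also have "\<dots> = length (filter (\<lambda>x. v \<le> x) ys)" by (simp add: length_filter_conv_card)
  also have "\<dots> = length (filter (\<lambda>x. v \<le> x) xs)" unfolding ys_def
    by (simp add: rev_filter[symmetric] filter_sort)
  also have "\<dots> = card {i. i < length xs \<and> v \<le> xs ! i}" by (simp add: length_filter_conv_card)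
  finally show ?thesis by (simp add: v_def)
qed

definition ext_ch :: "('c,'tx) config \<Rightarrow> ('c,'tx) config \<Rightarrow> bool" where
  "ext_ch \<sigma> \<sigma>' \<longleftrightarrow> (\<forall>ch. \<exists>zs. chan \<sigma>' ch = chan \<sigma> ch @ zs)"

lemma ext_refl: "chan \<sigma>' = chan \<sigma> \<Longrightarrow> ext_ch \<sigma> \<sigma>'"
  by (simp add: ext_ch_def)

lemma ext_trans: "ext_ch a b \<Longrightarrow> ext_ch b c \<Longrightarrow> ext_ch a c"
  unfolding ext_ch_def by (metis append.assoc)

lemma ext_send: "ext_ch \<sigma> (send p q m \<sigma>)"
  by (auto simp: ext_ch_def send_def)

lemma ext_bcast: "ext_ch \<sigma> (bcast p S m \<sigma>)"
  by (auto simp: ext_ch_def bcast_def)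

lemma ext_srv: "ext_ch \<sigma> (srv_handle n s p m \<sigma>)"
proof (cases m)
  case (Propose T)
  then show ?thesis
    by (cases p) (auto simp: srv_handle_def intro: ext_refl ext_trans[OF ext_send ext_bcast])
next
  case (Confirm T t)
  let ?s1 = "\<sigma>\<lparr>clk := (clk \<sigma>)(s := max (clk \<sigma> s) t)\<rparr>"
  let ?s2 = "?s1\<lparr>fwd := (fwd \<sigma>)(s := insert (T, t) (fwd \<sigma> s))\<rparr>"
  have "ext_ch \<sigma> ?s2" by (rule ext_refl) simp
  hence "ext_ch \<sigma> (bcast (Srv s) ({..<n} - {s}) (Confirm T t) ?s2)"
    by (rule ext_trans[OF _ ext_bcast])
  moreover have "ext_ch \<sigma> ?s1" by (rule ext_refl) simp
  ultimately show ?thesis using Confirm by (simp add: srv_handle_def Let_def)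
qed (auto simp: srv_handle_def intro: ext_refl)

lemma ext_cli: "ext_ch \<sigma> (cli_handle n c p m \<sigma>)"
  unfolding cli_handle_def
  by (auto intro!: ext_refl split: node.splits msg.splits cphase.splits)

lemma step_ext:
  assumes "step n f Byz \<sigma> ev \<sigma>'" "\<forall>m. ev \<noteq> EvDeliver (fst ch) (snd ch) m"
  shows "\<exists>zs. chan \<sigma>' ch = chan \<sigma> ch @ zs"
proof (cases ev)
  case (EvDeliver p q m)
  let ?s0 = "\<sigma>\<lparr>chan := (chan \<sigma>)((p, q) := tl (chan \<sigma> (p, q)))\<rparr>"
  have ch: "chan ?s0 ch = chan \<sigma> ch" using assms(2) EvDeliver by (cases ch) auto
  have "ext_ch ?s0 \<sigma>'" using assms(1) EvDeliver
    by (auto simp: step_def deliver_def Let_def ext_srv ext_cli intro: ext_refl split: node.splits)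
  hence "\<exists>zs. chan \<sigma>' ch = chan ?s0 ch @ zs" unfolding ext_ch_def by blast
  then show ?thesis using ch by simp
next
  case (EvPropose c T)
  then show ?thesis using assms
    by (auto simp: step_def bcast_def)
next
  case (EvConfirm c T)
  then show ?thesis using assms
    by (auto simp: step_def bcast_def)
next
  case (EvByz s q m)
  then show ?thesis using assms
    by (auto simp: step_def send_def)
qed (use assms in \<open>auto simp: step_def\<close>)

lemma step_deliv:
  assumes "step n f Byz \<sigma> (EvDeliver p q m) \<sigma>'"
  shows "\<exists>rest zs. chan \<sigma> (p,q) = m # rest \<and> chan \<sigma>' (p,q) = rest @ zs"
proof -
  obtain rest where r: "chan \<sigma> (p,q) = m # rest" using assms by (auto simp: step_def)
  let ?s0 = "\<sigma>\<lparr>chan := (chan \<sigma>)((p, q) := tl (chan \<sigma> (p, q)))\<rparr>"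
  have "ext_ch ?s0 \<sigma>'" using assms
    by (auto simp: step_def deliver_def Let_def ext_srv ext_cli intro: ext_refl split: node.splits)
  hence "\<exists>zs. chan \<sigma>' (p,q) = chan ?s0 (p,q) @ zs" unfolding ext_ch_def by blast
  then show ?thesis using r by simp
qed

lemma no_deliv_ext:
  assumes "\<forall>i. step n f Byz (ex i) (lab i) (ex (Suc i))"
  shows "(\<forall>j. i \<le> j \<and> j < i + d \<longrightarrow> (\<forall>m. lab j \<noteq> EvDeliver p q m))
    \<Longrightarrow> \<exists>zs. chan (ex (i + d)) (p,q) = chan (ex i) (p,q) @ zs"
proof (induction d)
  case 0 then show ?case by simp
next
  case (Suc d)
  then obtain zs where zs: "chan (ex (i + d)) (p,q) = chan (ex i) (p,q) @ zs" by auto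
  have "\<forall>m. lab (i+d) \<noteq> EvDeliver (fst (p,q)) (snd (p,q)) m" using Suc.prems by auto
  then obtain ys where "chan (ex (Suc (i + d))) (p,q) = chan (ex (i+d)) (p,q) @ ys"
    using step_ext assms by blast
  then show ?case using zs by simp
qed

lemma first_delivery:
  assumes run: "run n f Byz ex lab"
    and fair: "correct n Byz ex p \<or> (\<exists>c. p = Cli c)" "correct n Byz ex q"
    and ne: "chan (ex i) (p,q) \<noteq> []"
  shows "\<exists>j\<ge>i. lab j = EvDeliver p q (hd (chan (ex i) (p,q))) \<and>
           (\<exists>ys. chan (ex (Suc j)) (p,q) = tl (chan (ex i) (p,q)) @ ys)"
proof -
  have steps: "\<forall>i. step n f Byz (ex i) (lab i) (ex (Suc i))" using run by (simp add: run_def)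
  have "\<exists>j\<ge>i. \<exists>m. lab j = EvDeliver p q m" using run fair ne unfolding run_def by blast
  define j0 where "j0 = (LEAST j. i \<le> j \<and> (\<exists>m. lab j = EvDeliver p q m))"
  have j0: "i \<le> j0 \<and> (\<exists>m. lab j0 = EvDeliver p q m)"
    unfolding j0_def by (rule LeastI_ex) (use \<open>\<exists>j\<ge>i. \<exists>m. lab j = EvDeliver p q m\<close> in blast)
  have before: "\<forall>j. i \<le> j \<and> j < i + (j0 - i) \<longrightarrow> (\<forall>m. lab j \<noteq> EvDeliver p q m)"
  proof (rule allI, rule impI)
    fix j assume "i \<le> j \<and> j < i + (j0 - i)"
    hence "j < j0" by linarith
    thus "\<forall>m. lab j \<noteq> EvDeliver p q m" using not_less_Least[of j "\<lambda>j. i \<le> j \<and> (\<exists>m. lab j = EvDeliver p q m)"]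
      \<open>i \<le> j \<and> j < i + (j0 - i)\<close> unfolding j0_def by blast
  qed
  obtain zs where zs: "chan (ex j0) (p,q) = chan (ex i) (p,q) @ zs"
    using no_deliv_ext[OF steps before] j0 by auto
  obtain m0 where m0: "lab j0 = EvDeliver p q m0" using j0 by blast
  obtain rest ys where r: "chan (ex j0) (p,q) = m0 # rest" "chan (ex (Suc j0)) (p,q) = rest @ ys"
    using step_deliv[of n f Byz "ex j0" p q m0 "ex (Suc j0)"] steps m0 by metis
  have "m0 = hd (chan (ex i) (p,q))" "rest = tl (chan (ex i) (p,q)) @ zs"
    using r(1) zs ne by (cases "chan (ex i) (p,q)"; simp)+
  thus ?thesis using j0 m0 r(2) by auto
qed

lemma eventually_delivered:
  assumes run: "run n f Byz ex lab"
    and fair: "correct n Byz ex p \<or> (\<exists>c. p = Cli c)" "correct n Byz ex q"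
  shows "k < length (chan (ex i) (p,q)) \<Longrightarrow> \<exists>j\<ge>i. lab j = EvDeliver p q (chan (ex i) (p,q) ! k)"
proof (induction k arbitrary: i)
  case (0 i)
  hence ne: "chan (ex i) (p,q) \<noteq> []" by auto
  from first_delivery[OF run fair ne] show ?case using ne by (auto simp: hd_conv_nth)
next
  case (Suc k i)
  hence ne: "chan (ex i) (p,q) \<noteq> []" by auto
  from first_delivery[OF run fair ne] obtain j ys where
    j: "j \<ge> i" "chan (ex (Suc j)) (p,q) = tl (chan (ex i) (p,q)) @ ys" by blast
  have "k < length (chan (ex (Suc j)) (p,q))" using j Suc.prems by simp
  from Suc.IH[OF this] obtain j' where "j' \<ge> Suc j" "lab j' = EvDeliver p q (chan (ex (Suc j)) (p,q) ! k)"
    by blast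
  moreover have "chan (ex (Suc j)) (p,q) ! k = chan (ex i) (p,q) ! Suc k"
    using j Suc.prems ne by (auto simp: nth_append nth_tl)
  ultimately show ?case using j by (metis Suc_leD order.trans)
qed


definition okv :: "('c,'tx) config \<Rightarrow> int \<Rightarrow> bool" where
  "okv \<sigma> v \<longleftrightarrow> v = 0 \<or> (\<exists>T. (T, v) \<in> signed \<sigma>)"

definition Inv :: "nat \<Rightarrow> nat set \<Rightarrow> ('c,'tx) config \<Rightarrow> bool" where
  "Inv n Byz \<sigma> \<longleftrightarrow>
    (\<forall>T t t'. (T,t) \<in> signed \<sigma> \<longrightarrow> 0 < t' \<longrightarrow> t' < t \<longrightarrow> (\<exists>T'. (T',t') \<in> signed \<sigma>)) \<and>
    (\<forall>s. s < n \<and> s \<notin> Byz \<longrightarrow> okv \<sigma> (clk \<sigma> s)) \<and>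
    (\<forall>ch T t. Confirm T t \<in> set (chan \<sigma> ch) \<longrightarrow> (T,t) \<in> signed \<sigma>) \<and>
    (\<forall>s q T v. s < n \<and> s \<notin> Byz \<and> ProposeAck T v \<in> set (chan \<sigma> (Srv s, q)) \<longrightarrow> okv \<sigma> v) \<and>
    (\<forall>c T ts s v. cst \<sigma> c T = Waiting ts \<and> s < n \<and> s \<notin> Byz \<and> ts s = Some v \<longrightarrow> okv \<sigma> v)"

lemma InvI:
  assumes "\<And>T t t'. (T,t) \<in> signed \<sigma> \<Longrightarrow> 0 < t' \<Longrightarrow> t' < t \<Longrightarrow> \<exists>T'. (T',t') \<in> signed \<sigma>"
    "\<And>s. s < n \<Longrightarrow> s \<notin> Byz \<Longrightarrow> okv \<sigma> (clk \<sigma> s)"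
    "\<And>ch T t. Confirm T t \<in> set (chan \<sigma> ch) \<Longrightarrow> (T,t) \<in> signed \<sigma>"
    "\<And>s q T v. s < n \<Longrightarrow> s \<notin> Byz \<Longrightarrow> ProposeAck T v \<in> set (chan \<sigma> (Srv s, q)) \<Longrightarrow> okv \<sigma> v"
    "\<And>c T ts s v. cst \<sigma> c T = Waiting ts \<Longrightarrow> s < n \<Longrightarrow> s \<notin> Byz \<Longrightarrow> ts s = Some v \<Longrightarrow> okv \<sigma> v"
  shows "Inv n Byz \<sigma>"
  unfolding Inv_def using assms by blast

lemma InvD1: "Inv n Byz \<sigma> \<Longrightarrow> (T,t) \<in> signed \<sigma> \<Longrightarrow> 0 < t' \<Longrightarrow> t' < t \<Longrightarrow> \<exists>T'. (T',t') \<in> signed \<sigma>"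
  unfolding Inv_def by blast
lemma InvD2: "Inv n Byz \<sigma> \<Longrightarrow> s < n \<Longrightarrow> s \<notin> Byz \<Longrightarrow> okv \<sigma> (clk \<sigma> s)"
  unfolding Inv_def by blast
lemma InvD3: "Inv n Byz \<sigma> \<Longrightarrow> Confirm T t \<in> set (chan \<sigma> ch) \<Longrightarrow> (T,t) \<in> signed \<sigma>"
  unfolding Inv_def by blast
lemma InvD4: "Inv n Byz \<sigma> \<Longrightarrow> s < n \<Longrightarrow> s \<notin> Byz \<Longrightarrow> ProposeAck T v \<in> set (chan \<sigma> (Srv s, q)) \<Longrightarrow> okv \<sigma> v"
  unfolding Inv_def by blast
lemma InvD5: "Inv n Byz \<sigma> \<Longrightarrow> cst \<sigma> c T = Waiting ts \<Longrightarrow> s < n \<Longrightarrow> s \<notin> Byz \<Longrightarrow> ts s = Some v \<Longrightarrow> okv \<sigma> v"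
  unfolding Inv_def by blast

lemma Inv_init: "Inv n Byz init_config"
  by (simp add: Inv_def init_config_def okv_def)

lemma set_tl_sub: "x \<in> set (tl xs) \<Longrightarrow> x \<in> set xs"
  by (cases xs) auto

lemma okv_same: "signed \<sigma>' = signed \<sigma> \<Longrightarrow> okv \<sigma>' = okv \<sigma>"
  by (simp add: okv_def fun_eq_iff)

lemma Inv_sub:
  assumes inv: "Inv n Byz \<sigma>" and e: "signed \<sigma>' = signed \<sigma>" "clk \<sigma>' = clk \<sigma>" "cst \<sigma>' = cst \<sigma>"
    and sub: "\<And>x ch. x \<in> set (chan \<sigma>' ch) \<Longrightarrow> x \<in> set (chan \<sigma> ch)"
  shows "Inv n Byz \<sigma>'"
  unfolding okv_same[OF e(1)] e
  by (rule InvI; unfold okv_same[OF e(1)] e)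
     (auto intro: InvD1[OF inv] InvD2[OF inv] InvD3[OF inv sub] InvD4[OF inv _ _ sub] InvD5[OF inv])

lemma Inv_tl: "Inv n Byz \<sigma> \<Longrightarrow> Inv n Byz (\<sigma>\<lparr>chan := (chan \<sigma>)(ch := tl (chan \<sigma> ch))\<rparr>)"
  by (rule Inv_sub) (auto split: if_splits dest: set_tl_sub)


lemma bcast_simps[simp]:
  "signed (bcast p S m \<sigma>) = signed \<sigma>" "clk (bcast p S m \<sigma>) = clk \<sigma>" "cst (bcast p S m \<sigma>) = cst \<sigma>"
  "fwd (bcast p S m \<sigma>) = fwd \<sigma>" "crashed (bcast p S m \<sigma>) = crashed \<sigma>"
  by (simp_all add: bcast_def)

lemma send_simps[simp]:
  "signed (send p q m \<sigma>) = signed \<sigma>" "clk (send p q m \<sigma>) = clk \<sigma>" "cst (send p q m \<sigma>) = cst \<sigma>"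
  "fwd (send p q m \<sigma>) = fwd \<sigma>" "crashed (send p q m \<sigma>) = crashed \<sigma>"
  by (simp_all add: send_def)

lemma bcast_set: "x \<in> set (chan (bcast p S m \<sigma>) ch) \<Longrightarrow> x \<in> set (chan \<sigma> ch) \<or> (x = m \<and> fst ch = p)"
  by (auto simp: bcast_def split: if_splits)

lemma send_set: "x \<in> set (chan (send p q m \<sigma>) ch) \<Longrightarrow> x \<in> set (chan \<sigma> ch) \<or> (x = m \<and> ch = (p, q))"
  by (auto simp: send_def split: if_splits)

lemma Inv_add:
  assumes inv: "Inv n Byz \<sigma>" and e: "signed \<sigma>' = signed \<sigma>" "cst \<sigma>' = cst \<sigma>"
    and ck: "\<And>s. s < n \<Longrightarrow> s \<notin> Byz \<Longrightarrow> okv \<sigma> (clk \<sigma>' s)"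
    and new: "\<And>ch x. x \<in> set (chan \<sigma>' ch) \<Longrightarrow> x \<in> set (chan \<sigma> ch) \<or>
        ((\<forall>T t. x = Confirm T t \<longrightarrow> (T,t) \<in> signed \<sigma>) \<and>
         (\<forall>s q T v. ch = (Srv s, q) \<and> s < n \<and> s \<notin> Byz \<and> x = ProposeAck T v \<longrightarrow> okv \<sigma> v))"
  shows "Inv n Byz \<sigma>'"
proof (rule InvI; unfold okv_same[OF e(1)] e)
  show "\<exists>T'. (T', t') \<in> signed \<sigma>" if "(T, t) \<in> signed \<sigma>" "0 < t'" "t' < t" for T t t'
    using InvD1[OF inv that] .
  show "okv \<sigma> (clk \<sigma>' s)" if "s < n" "s \<notin> Byz" for s using ck that .
  show "(T, t) \<in> signed \<sigma>" if "Confirm T t \<in> set (chan \<sigma>' ch)" for ch T t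
    using new[OF that] InvD3[OF inv] by blast
  show "okv \<sigma> v" if "s < n" "s \<notin> Byz" "ProposeAck T v \<in> set (chan \<sigma>' (Srv s, q))" for s q T v
    using new[OF that(3)] InvD4[OF inv that(1,2)] that(1,2) by blast
  show "okv \<sigma> v" if "cst \<sigma> c T = Waiting ts" "s < n" "s \<notin> Byz" "ts s = Some v" for c T ts s v
    using InvD5[OF inv that] .
qed


lemma Inv_srv:
  assumes inv: "Inv n Byz \<sigma>" and sn: "s < n" "s \<notin> Byz" and cf: "\<forall>T t. m = Confirm T t \<longrightarrow> (T,t) \<in> signed \<sigma>"
  shows "Inv n Byz (srv_handle n s p m \<sigma>)"
proof (cases m)
  case (Propose T)
  show ?thesis
  proof (cases p)
    case (Cli c)
    have ck: "okv \<sigma> (clk \<sigma> s)" using InvD2[OF inv sn] .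
    show ?thesis unfolding Propose Cli srv_handle_def msg.case node.case
      by (rule Inv_add[OF inv]) (use ck InvD2[OF inv] in \<open>auto dest!: bcast_set send_set\<close>)
  qed (use Propose in \<open>simp add: srv_handle_def inv\<close>)
next
  case (Confirm T t)
  have ct: "okv \<sigma> t" using cf Confirm by (auto simp: okv_def)
  have ck2: "okv \<sigma> (((clk \<sigma>)(s := max (clk \<sigma> s) t)) s')" if "s' < n" "s' \<notin> Byz" for s'
    using InvD2[OF inv that] ct by (auto simp: max_def)
  let ?s1 = "\<sigma>\<lparr>clk := (clk \<sigma>)(s := max (clk \<sigma> s) t)\<rparr>"
  let ?s2 = "?s1\<lparr>fwd := (fwd \<sigma>)(s := insert (T, t) (fwd \<sigma> s))\<rparr>"
  have i1: "Inv n Byz ?s1"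
    apply (rule Inv_add[OF inv])
       apply simp
      apply simp
    subgoal for s' using ck2[of s'] by simp
    by simp
  have i2: "Inv n Byz (bcast (Srv s) ({..<n} - {s}) (Confirm T t) ?s2)"
    apply (rule Inv_add[OF inv])
       apply simp
      apply simp
    subgoal for s' using ck2[of s'] by simp
    using cf Confirm by (auto dest!: bcast_set)
  show ?thesis unfolding Confirm srv_handle_def msg.case Let_def
    using i1 i2 by simp
qed (use inv in \<open>simp_all add: srv_handle_def\<close>)

lemma Inv_cst:
  assumes inv: "Inv n Byz \<sigma>" and X: "\<And>ts' s v. X = Waiting ts' \<Longrightarrow> s < n \<Longrightarrow> s \<notin> Byz \<Longrightarrow> ts' s = Some v \<Longrightarrow> okv \<sigma> v"
  shows "Inv n Byz (\<sigma>\<lparr>cst := (cst \<sigma>)(c := (cst \<sigma> c)(T := X))\<rparr>)"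
  apply (rule InvI)
  subgoal for T1 t t' using InvD1[OF inv, of T1 t t'] by simp
  subgoal for s using InvD2[OF inv, of s] by (simp add: okv_def)
  subgoal for ch T1 t using InvD3[OF inv, of T1 t ch] by simp
  subgoal for s q T1 v using InvD4[OF inv, of s T1 v q] by (simp add: okv_def)
  subgoal for c' T1 ts s v using InvD5[OF inv, of c' T1 ts s v] X[of ts s v] by (auto simp: okv_def split: if_splits)
  done

lemma Inv_cli:
  assumes inv: "Inv n Byz \<sigma>" and pa: "\<forall>s T v. p = Srv s \<and> s < n \<and> s \<notin> Byz \<and> m = ProposeAck T v \<longrightarrow> okv \<sigma> v"
  shows "Inv n Byz (cli_handle n c p m \<sigma>)"
proof (cases "c \<in> crashed \<sigma> ")
  case False
  show ?thesis
  proof (cases "\<exists>s T v. p = Srv s \<and> m = ProposeAck T v")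
    case True
    then obtain s T v where pm: "p = Srv s" "m = ProposeAck T v" by blast
    show ?thesis
    proof (cases "cst \<sigma> c T")
      case (Waiting ts)
      have "Inv n Byz (\<sigma>\<lparr>cst := (cst \<sigma>)(c := (cst \<sigma> c)(T := Waiting (ts(s := Some v))))\<rparr>)"
      proof (rule Inv_cst[OF inv])
        fix ts' s' v' assume "Waiting (ts(s := Some v)) = Waiting ts'" "s' < n" "s' \<notin> Byz" "ts' s' = Some v'"
        then show "okv \<sigma> v'" using InvD5[OF inv Waiting] pa pm by (auto split: if_splits)
      qed
      then show ?thesis using False pm Waiting inv by (auto simp: cli_handle_def)
    qed (use False pm inv in \<open>simp_all add: cli_handle_def\<close>)
  next
    case nt: False
    have "cli_handle n c p m \<sigma> = \<sigma>" using nt False unfolding cli_handle_def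
      by (auto split: node.splits msg.splits)
    then show ?thesis using inv by simp
  qed
qed (use inv in \<open>simp add: cli_handle_def\<close>)


lemma new_ts:
  assumes inv: "Inv n Byz \<sigma>" and w: "cst \<sigma> c T = Waiting ts" and nf: "n = 4 * f + 1"
    and byz: "Byz \<subseteq> {..<n}" "card Byz \<le> f" and t': "0 < t'" "t' < client_ts n f ts"
  shows "\<exists>T'. (T', t') \<in> signed \<sigma>"
proof -
  define g where "g = (\<lambda>s. case ts s of None \<Rightarrow> 0 | Some v \<Rightarrow> v)"
  define L where "L = map g [0..<n]"
  define k where "k = kth_largest (f + 1) L"
  have ct: "client_ts n f ts = 1 + k" by (simp add: client_ts_def k_def L_def g_def)
  have lenL: "length L = n" by (simp add: L_def)
  define A where "A = {i. i < length L \<and> k \<le> L ! i}"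
  have cA: "f + 1 \<le> card A" unfolding A_def k_def
    by (rule kth_count) (use nf lenL in auto)
  have "\<not> A \<subseteq> Byz"
  proof
    assume "A \<subseteq> Byz"
    hence "card A \<le> card Byz" using byz(1) by (intro card_mono) (auto intro: finite_subset)
    thus False using cA byz(2) by simp
  qed
  then obtain s where s: "s \<in> A" "s \<notin> Byz" by blast
  have sn: "s < n" and ks: "k \<le> g s" using s lenL by (auto simp: A_def L_def)
  have "t' \<le> g s" using t' ct ks by simp
  then obtain v where v: "ts s = Some v" "t' \<le> v" using t' by (cases "ts s") (auto simp: g_def)
  have "okv \<sigma> v" using InvD5[OF inv w sn s(2) v(1)] .
  then obtain T0 where T0: "(T0, v) \<in> signed \<sigma>" using v t' by (auto simp: okv_def)
  show ?thesis
  proof (cases "t' = v")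
    case True then show ?thesis using T0 by blast
  next
    case False
    then show ?thesis using InvD1[OF inv T0 t'(1)] v by simp
  qed
qed

lemma Inv_step:
  assumes inv: "Inv n Byz \<sigma>" and st: "step n f Byz \<sigma> ev \<sigma>'" and nf: "n = 4 * f + 1"
    and byz: "Byz \<subseteq> {..<n}" "card Byz \<le> f"
  shows "Inv n Byz \<sigma>'"
proof (cases ev)
  case (EvPropose c T)
  let ?s1 = "\<sigma>\<lparr>cst := (cst \<sigma>)(c := (cst \<sigma> c)(T := Waiting (\<lambda>_. None)))\<rparr>"
  have i1: "Inv n Byz ?s1" by (rule Inv_cst[OF inv]) auto
  have "\<sigma>' = bcast (Cli c) {..<n} (Propose T) ?s1" using st EvPropose by (simp add: step_def)
  moreover have "Inv n Byz (bcast (Cli c) {..<n} (Propose T) ?s1)"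
    apply (rule Inv_add[OF i1])
       apply simp
      apply simp
    subgoal for s using InvD2[OF i1, of s] by simp
    by (auto dest!: bcast_set)
  ultimately show ?thesis by simp
next
  case (EvConfirm c T)
  then obtain ts where w: "cst \<sigma> c T = Waiting ts" and
    s': "\<sigma>' = bcast (Cli c) {..<n} (Confirm T (client_ts n f ts))
                      (\<sigma>\<lparr>cst := (cst \<sigma>)(c := (cst \<sigma> c)(T := Confirmed)),
                         signed := insert (T, client_ts n f ts) (signed \<sigma>)\<rparr>)"
    using st by (auto simp: step_def)
  define tt where "tt = client_ts n f ts"
  let ?s1 = "\<sigma>\<lparr>cst := (cst \<sigma>)(c := (cst \<sigma> c)(T := Confirmed)),
                         signed := insert (T, tt) (signed \<sigma>)\<rparr>"
  have okm: "okv \<sigma> v \<Longrightarrow> okv ?s1 v" for v by (auto simp: okv_def)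
  have nt: "\<exists>T'. (T', t') \<in> signed \<sigma>" if "0 < t'" "t' < tt" for t'
    using new_ts[OF inv w nf byz that(1)] that(2) by (simp add: tt_def)
  have i1: "Inv n Byz ?s1"
    apply (rule InvI)
    subgoal for T1 t t' using InvD1[OF inv, of T1 t t'] nt[of t'] by auto
    subgoal for s using InvD2[OF inv, of s] okm by simp
    subgoal for ch T1 t using InvD3[OF inv, of T1 t ch] by simp
    subgoal for s q T1 v using InvD4[OF inv, of s T1 v q] okm by simp
    subgoal for c' T1 ts' s v using InvD5[OF inv, of c' T1 ts' s v] okm by (auto split: if_splits)
    done
  have "Inv n Byz (bcast (Cli c) {..<n} (Confirm T tt) ?s1)"
    apply (rule Inv_add[OF i1])
       apply simp
      apply simp
    subgoal for s using InvD2[OF i1, of s] by simp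
    by (auto dest!: bcast_set)
  then show ?thesis using s' by (simp add: tt_def)
next
  case (EvDeliver p q m)
  then obtain rest where r: "chan \<sigma> (p,q) = m # rest" and
    s': "\<sigma>' = deliver n Byz p q m \<sigma>" using st by (auto simp: step_def)
  let ?s0 = "\<sigma>\<lparr>chan := (chan \<sigma>)((p, q) := tl (chan \<sigma> (p, q)))\<rparr>"
  have i0: "Inv n Byz ?s0" by (rule Inv_tl[OF inv])
  have mem: "m \<in> set (chan \<sigma> (p,q))" using r by simp
  have c1: "\<forall>T t. m = Confirm T t \<longrightarrow> (T,t) \<in> signed ?s0"
    using InvD3[OF inv] mem by auto
  have c2: "\<forall>s T v. p = Srv s \<and> s < n \<and> s \<notin> Byz \<and> m = ProposeAck T v \<longrightarrow> okv ?s0 v"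
    using InvD4[OF inv] mem by (auto simp: okv_def)
  show ?thesis
  proof (cases q)
    case (Srv s)
    then show ?thesis using s' i0 c1 by (auto simp: deliver_def Let_def intro: Inv_srv)
  next
    case (Cli c)
    then show ?thesis using s' i0 c2 by (auto simp: deliver_def Let_def intro: Inv_cli)
  qed
next
  case (EvCrash c)
  then show ?thesis using st inv by (auto simp: step_def intro: Inv_sub)
next
  case (EvByz s q m)
  then have sb: "s \<in> Byz" and sg: "\<forall>T t. m = Confirm T t \<longrightarrow> (T, t) \<in> signed \<sigma>"
    and s': "\<sigma>' = send (Srv s) q m \<sigma>" using st by (auto simp: step_def)
  have "Inv n Byz (send (Srv s) q m \<sigma>)"
    apply (rule Inv_add[OF inv])
       apply simp
      apply simp
    subgoal for s using InvD2[OF inv, of s] by simp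
    using sb sg by (auto dest!: send_set)
  then show ?thesis using s' by simp
next
  case EvSkip
  then show ?thesis using st inv by (simp add: step_def)
qed


lemma Inv_run:
  assumes run: "run n f Byz ex lab" and nf: "n = 4 * f + 1"
    and byz: "Byz \<subseteq> {..<n}" "card Byz \<le> f"
  shows "Inv n Byz (ex i)"
proof (induction i)
  case 0 then show ?case using run Inv_init by (simp add: run_def)
next
  case (Suc i)
  have "step n f Byz (ex i) (lab i) (ex (Suc i))" using run by (simp add: run_def)
  then show ?case using Inv_step[OF Suc.IH _ nf byz] by blast
qed

lemma signed_srv: "signed (srv_handle n s p m \<sigma>) = signed \<sigma>"
  by (auto simp: srv_handle_def Let_def split: msg.splits node.splits)

lemma signed_cli: "signed (cli_handle n c p m \<sigma>) = signed \<sigma>"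
  by (auto simp: cli_handle_def split: msg.splits node.splits cphase.splits)

lemma signed_step:
  assumes st: "step n f Byz \<sigma> ev \<sigma>'" and x: "x \<in> signed \<sigma>'" and s0: "s0 < n"
  shows "x \<in> signed \<sigma> \<or> (\<exists>c. Confirm (fst x) (snd x) \<in> set (chan \<sigma>' (Cli c, Srv s0)))"
proof (cases ev)
  case (EvConfirm c T)
  then obtain ts where
    s': "\<sigma>' = bcast (Cli c) {..<n} (Confirm T (client_ts n f ts))
                      (\<sigma>\<lparr>cst := (cst \<sigma>)(c := (cst \<sigma> c)(T := Confirmed)),
                         signed := insert (T, client_ts n f ts) (signed \<sigma>)\<rparr>)"
    using st by (auto simp: step_def)
  show ?thesis
  proof (cases "x \<in> signed \<sigma>")
    case False
    hence "x = (T, client_ts n f ts)" using x s' by simp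
    moreover have "Confirm T (client_ts n f ts) \<in> set (chan \<sigma>' (Cli c, Srv s0))"
      using s' s0 by (simp add: bcast_def)
    ultimately show ?thesis by auto
  qed simp
next
  case (EvDeliver p q m)
  then have "\<sigma>' = deliver n Byz p q m \<sigma>" using st by (simp add: step_def)
  then have "signed \<sigma>' = signed \<sigma>"
    by (auto simp: deliver_def Let_def signed_srv signed_cli split: node.splits)
  then show ?thesis using x by simp
qed (use st x in \<open>auto simp: step_def\<close>)

lemma signed_origin:
  assumes run: "run n f Byz ex lab" and s0: "s0 < n"
  shows "x \<in> signed (ex i) \<Longrightarrow> \<exists>j c. Confirm (fst x) (snd x) \<in> set (chan (ex j) (Cli c, Srv s0))"
proof (induction i)
  case 0 then show ?case using run by (simp add: run_def init_config_def)
next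
  case (Suc i)
  have "step n f Byz (ex i) (lab i) (ex (Suc i))" using run by (simp add: run_def)
  from signed_step[OF this Suc.prems s0] Suc.IH show ?case by blast
qed

theorem lemma2:
  fixes n f :: nat and Byz :: "nat set"
    and ex :: "nat \<Rightarrow> ('c, 'tx) config" and lab :: "nat \<Rightarrow> ('c, 'tx) event"
    and T :: 'tx and t t' :: int
  assumes "n = 4 * f + 1"
    and "Byz \<subseteq> {..<n}" and "card Byz \<le> f"
    and "run n f Byz ex lab"
    and "assigned n Byz lab T t"
    and "0 < t'" and "t' < t"
  shows "\<exists>T'. assigned n Byz lab T' t'"
proof -
  note run = assms(4)
  obtain i c s where s: "s < n" "s \<notin> Byz" and li: "lab i = EvDeliver (Cli c) (Srv s) (Confirm T t)"
    using assms(5) unfolding assigned_def by blast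
  have "step n f Byz (ex i) (lab i) (ex (Suc i))" using run by (simp add: run_def)
  then obtain rest where "chan (ex i) (Cli c, Srv s) = Confirm T t # rest"
    using li by (auto simp: step_def)
  hence mem: "Confirm T t \<in> set (chan (ex i) (Cli c, Srv s))" by simp
  have inv: "Inv n Byz (ex i)" using Inv_run[OF run assms(1-3)] .
  have "(T, t) \<in> signed (ex i)" using InvD3[OF inv mem] .
  then obtain T' where T': "(T', t') \<in> signed (ex i)" using InvD1[OF inv _ assms(6,7)] by blast
  obtain j c' where "Confirm T' t' \<in> set (chan (ex j) (Cli c', Srv s))"
    using signed_origin[OF run s(1) T'] by auto
  then obtain k where k: "k < length (chan (ex j) (Cli c', Srv s))" "chan (ex j) (Cli c', Srv s) ! k = Confirm T' t'"
    by (auto simp: in_set_conv_nth)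
  have cq: "correct n Byz ex (Srv s)" using s by (simp add: correct_def)
  obtain j' where "lab j' = EvDeliver (Cli c') (Srv s) (Confirm T' t')"
    using eventually_delivered[OF run _ cq k(1)] k(2) by auto
  then show ?thesis using s unfolding assigned_def by blast
qed


end
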